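(* Let $f(p)$ be a real function with values in $[0,1]$. The tuple $(\sqrt{f(p)},\sqrt{1-f(p)})$ is simulable if and only if $\sqrt{\frac{f(p)}{1-f(p)}}$ belongs to the field generated by $\sqrt{\frac{p}{1-p}}$ and $\mathbb{R}$; equivalently, if and only if there exist polynomials $g_1,g_2,g_3,g_4$ in $p$ with real coefficients ($g_2,g_4\neq0$) such that $$\sqrt{\frac{f(p)}{1-f(p)}}=\frac{g_1(p)}{g_2(p)}\sqrt{\frac{p}{1-p}}+\frac{g_3(p)}{g_4(p)}.$$
   Context: Let $p\in[0,1]$ be an unknown parameter and let $|p\rangle=\sqrt{p}|0\rangle+\sqrt{1-p}|1\rangle$. For a complex function $h(p)$ write $|f_h\rangle=\frac{1}{\sqrt{1+|h(p)|^2}}(h(p)|0\rangle+|1\rangle)$. A tuple $(k_0(p),k_1(p))$ of complex functions with $|k_0|^2+|k_1|^2=1$ is called simulable if, starting from an unbounded supply of copies of $|p\rangle$, one can produce the single-qubit state $|f_{k_0/k_1}\rangle=k_0(p)|0\rangle+k_1(p)|1\rangle$ (up to a global phase) in finitely many steps with nonzero success probability, where each step applies a unitary transformation or a measurement (in the computational basis) to the current state together with auxiliary qubits; the operations may not depend on $p$. Auxiliary qubits may be other simulable states or constant states $|a_c\rangle=\frac{1}{\sqrt{|a|^2+1}}(a|0\rangle+|1\rangle)$ with $a\in\mathbb{C}$ a constant independent of $p$. *)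

theory Defs
  imports Complex_Main "HOL-Computational_Algebra.Polynomial"
begin

text \<open>An n-qubit (unnormalised) state vector is a function nat \<Rightarrow> complex supported on
  the indices below 2^n (computational basis, the last qubit is the least significant bit). Since every
  allowed operation is linear up to a p-dependent positive renormalisation, we track
  states up to a nonzero scalar (per p).\<close>

definition tensor_vec :: "nat \<Rightarrow> nat \<Rightarrow> (nat \<Rightarrow> complex) \<Rightarrow> (nat \<Rightarrow> complex) \<Rightarrow> nat \<Rightarrow> complex" where
  "tensor_vec n m v w = (\<lambda>i. if i < 2^(n+m) then v (i div 2^m) * w (i mod 2^m) else 0)"

definition unitary_mat :: "nat \<Rightarrow> (nat \<Rightarrow> nat \<Rightarrow> complex) \<Rightarrow> bool" where
  "unitary_mat n U \<longleftrightarrow> (\<forall>i<2^n. \<forall>j<2^n.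
      (\<Sum>k<2^n. cnj (U k i) * U k j) = (if i = j then 1 else 0))"

definition apply_mat :: "nat \<Rightarrow> (nat \<Rightarrow> nat \<Rightarrow> complex) \<Rightarrow> (nat \<Rightarrow> complex) \<Rightarrow> nat \<Rightarrow> complex" where
  "apply_mat n U v = (\<lambda>i. if i < 2^n then (\<Sum>j<2^n. U i j * v j) else 0)"

definition measure_last :: "nat \<Rightarrow> nat \<Rightarrow> (nat \<Rightarrow> complex) \<Rightarrow> nat \<Rightarrow> complex" where
  "measure_last n b v = (\<lambda>i. if i < 2^n then v (2 * i + b) else 0)"

inductive reachable :: "nat \<Rightarrow> (real \<Rightarrow> nat \<Rightarrow> complex) \<Rightarrow> bool" where
  copy: "reachable 1 (\<lambda>p i. if i = 0 then complex_of_real (sqrt p)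
                           else if i = 1 then complex_of_real (sqrt (1 - p)) else 0)"
| const: "reachable 1 (\<lambda>p i. if i = 0 then a else if i = 1 then 1 else 0)"
| tensor: "reachable n \<psi> \<Longrightarrow> reachable m \<phi> \<Longrightarrow>
           reachable (n + m) (\<lambda>p. tensor_vec n m (\<psi> p) (\<phi> p))"
| unitary: "reachable n \<psi> \<Longrightarrow> unitary_mat n U \<Longrightarrow>
           reachable n (\<lambda>p. apply_mat n U (\<psi> p))"
| measure: "reachable (Suc n) \<psi> \<Longrightarrow> b \<in> {0, 1} \<Longrightarrow>
           (\<exists>p\<in>{0<..<1}. \<exists>i<2^n. \<psi> p (2 * i + b) \<noteq> 0) \<Longrightarrow>
           reachable n (\<lambda>p. measure_last n b (\<psi> p))"

definition simulable :: "(real \<Rightarrow> complex) \<Rightarrow> (real \<Rightarrow> complex) \<Rightarrow> bool" where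
  "simulable k0 k1 \<longleftrightarrow>
     (\<forall>p\<in>{0<..<1}. (cmod (k0 p))^2 + (cmod (k1 p))^2 = 1) \<and>
     (\<exists>\<psi>. reachable 1 \<psi> \<and>
        (\<forall>p\<in>{0<..<1}. (\<psi> p 0 \<noteq> 0 \<or> \<psi> p 1 \<noteq> 0) \<longrightarrow>
            (\<exists>c. c \<noteq> 0 \<and> \<psi> p 0 = c * k0 p \<and> \<psi> p 1 = c * k1 p)))"

end

theory Submission
  imports Defs
begin

definition Rr :: "(real \<Rightarrow> complex) \<Rightarrow> (real \<Rightarrow> complex) \<Rightarrow> bool" where
  "Rr u v \<longleftrightarrow> (\<exists>\<psi> \<mu>. reachable 1 \<psi> \<and> (\<forall>p\<in>{0<..<1}. \<mu> p \<noteq> 0 \<and> \<psi> p 0 = \<mu> p * u p \<and> \<psi> p 1 = \<mu> p * v p))"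

lemma all4: "(\<forall>i<(4::nat). P i) \<longleftrightarrow> P 0 \<and> P 1 \<and> P 2 \<and> P 3"
  by (auto simp: less_Suc_eq numeral_eq_Suc)
lemma all2: "(\<forall>i<(2::nat). P i) \<longleftrightarrow> P 0 \<and> P 1"
  by (auto simp: less_Suc_eq numeral_eq_Suc)
lemma sum4: "(\<Sum>k<(4::nat). f k) = f 0 + f 1 + f 2 + f 3"
  by (simp add: numeral_eq_Suc add.commute add.left_commute)
lemma sum2: "(\<Sum>k<(2::nat). f k) = f 0 + f 1"
  by (simp add: numeral_eq_Suc)

lemma Rr_cong: "Rr u v \<Longrightarrow> (\<And>p. p \<in> {0<..<1} \<Longrightarrow> u p = u' p \<and> v p = v' p) \<Longrightarrow> Rr u' v'"
  unfolding Rr_def by metis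

lemma Rr_copy: "Rr (\<lambda>p. complex_of_real (sqrt p)) (\<lambda>p. complex_of_real (sqrt (1 - p)))"
proof -
  have r: "reachable 1 (\<lambda>p i. if i = 0 then complex_of_real (sqrt p)
                           else if i = 1 then complex_of_real (sqrt (1 - p)) else 0)" by (rule reachable.copy)
  show ?thesis unfolding Rr_def by (rule exI, rule exI[of _ "\<lambda>_. 1"], rule conjI[OF r]) simp
qed

lemma Rr_const: "Rr (\<lambda>p. a) (\<lambda>p. 1)"
proof -
  have r: "reachable 1 (\<lambda>p i. if i = 0 then a else if i = 1 then 1 else 0)" by (rule reachable.const)
  show ?thesis unfolding Rr_def by (rule exI, rule exI[of _ "\<lambda>_. 1"], rule conjI[OF r]) simp
qed

definition swapU :: "nat \<Rightarrow> nat \<Rightarrow> complex" where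
  "swapU i j = (if (i = 0 \<and> j = 1) \<or> (i = 1 \<and> j = 0) then 1 else 0)"

lemma swapU_unitary: "unitary_mat 1 swapU"
  unfolding unitary_mat_def swapU_def by (simp add: all2 sum2)

lemma Rr_swap: assumes "Rr u v" shows "Rr v u"
proof -
  from assms obtain \<psi> \<mu> where r: "reachable 1 \<psi>" and h: "\<forall>p\<in>{0<..<1}. \<mu> p \<noteq> 0 \<and> \<psi> p 0 = \<mu> p * u p \<and> \<psi> p 1 = \<mu> p * v p"
    unfolding Rr_def by blast
  have "reachable 1 (\<lambda>p. apply_mat 1 swapU (\<psi> p))" by (rule reachable.unitary[OF r swapU_unitary])
  moreover have "\<forall>p\<in>{0<..<1}. \<mu> p \<noteq> 0 \<and> apply_mat 1 swapU (\<psi> p) 0 = \<mu> p * v p \<and> apply_mat 1 swapU (\<psi> p) 1 = \<mu> p * u p"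
    using h by (simp add: apply_mat_def sum2 swapU_def)
  ultimately show ?thesis unfolding Rr_def by blast
qed

definition permU :: "nat \<Rightarrow> nat \<Rightarrow> complex" where
  "permU i j = (if (i = j \<and> i < 2) \<or> (i = 2 \<and> j = 3) \<or> (i = 3 \<and> j = 2) then 1 else 0)"

lemma permU_unitary: "unitary_mat 2 permU"
  unfolding unitary_mat_def permU_def by (simp add: all4 sum4)

definition hh :: complex where "hh = complex_of_real (1 / sqrt 2)"
lemma hh_sq: "cnj hh * hh = 1/2" "hh * hh = 1/2"
  unfolding hh_def by (simp_all add: complex_eq_iff power2_eq_square[symmetric] power_divide)

definition sumU :: "nat \<Rightarrow> nat \<Rightarrow> complex" where
  "sumU i j = (if i = 0 then (if j = 1 \<or> j = 2 then hh else 0)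
             else if i = 1 then (if j = 1 then hh else if j = 2 then - hh else 0)
             else if i = 2 then (if j = 3 then 1 else 0)
             else if i = 3 then (if j = 0 then 1 else 0) else 0)"

lemma sumU_unitary: "unitary_mat 2 sumU"
  unfolding unitary_mat_def sumU_def by (simp add: all4 sum4 hh_sq)

lemma dm: "(2::nat) div 2 = 1" "(2::nat) mod 2 = 0" "(3::nat) div 2 = 1" "(3::nat) mod 2 = 1"
  by simp_all

lemma ml: "measure_last 1 0 w 0 = w 0" "measure_last 1 0 w 1 = w 2"
  by (simp_all add: measure_last_def)

lemma tv: "tensor_vec 1 1 a b 0 = a 0 * b 0" "tensor_vec 1 1 a b 1 = a 0 * b 1"
  "tensor_vec 1 1 a b 2 = a 1 * b 0" "tensor_vec 1 1 a b 3 = a 1 * b 1"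
  by (simp_all add: tensor_vec_def)
lemma tv': "tensor_vec (Suc 0) (Suc 0) a b 0 = a 0 * b 0" "tensor_vec (Suc 0) (Suc 0) a b (Suc 0) = a 0 * b (Suc 0)"
  "tensor_vec (Suc 0) (Suc 0) a b 2 = a (Suc 0) * b 0" "tensor_vec (Suc 0) (Suc 0) a b 3 = a (Suc 0) * b (Suc 0)"
  using tv[of a b] by simp_all

lemma gate2:
  assumes r1: "reachable 1 \<psi>" and r2: "reachable 1 \<phi>" and U: "unitary_mat 2 U"
  and nz: "\<exists>p\<in>{0<..<1}. \<exists>i<2. apply_mat 2 U (tensor_vec 1 1 (\<psi> p) (\<phi> p)) (2 * i) \<noteq> 0"
  shows "reachable 1 (\<lambda>p. measure_last 1 0 (apply_mat 2 U (tensor_vec 1 1 (\<psi> p) (\<phi> p))))"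
proof -
  have "reachable (1+1) (\<lambda>p. tensor_vec 1 1 (\<psi> p) (\<phi> p))" by (rule reachable.tensor[OF r1 r2])
  hence t: "reachable (Suc 1) (\<lambda>p. tensor_vec 1 1 (\<psi> p) (\<phi> p))" by simp
  have "reachable (Suc 1) (\<lambda>p. apply_mat (Suc 1) U (tensor_vec 1 1 (\<psi> p) (\<phi> p)))"
    by (rule reachable.unitary[OF t]) (use U in \<open>simp add: numeral_2_eq_2\<close>)
  hence "reachable (Suc 1) (\<lambda>p. apply_mat 2 U (tensor_vec 1 1 (\<psi> p) (\<phi> p)))" unfolding Suc_1 .
  thus ?thesis by (rule reachable.measure) (use nz in auto)
qed

lemma Rr_prod:
  assumes "Rr u1 v1" "Rr u2 v2" and nz: "\<exists>p\<in>{0<..<1}. v1 p * v2 p \<noteq> 0"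
  shows "Rr (\<lambda>p. u1 p * u2 p) (\<lambda>p. v1 p * v2 p)"
proof -
  from assms obtain \<psi> \<mu> where r: "reachable 1 \<psi>" and h: "\<forall>p\<in>{0<..<1}. \<mu> p \<noteq> 0 \<and> \<psi> p 0 = \<mu> p * u1 p \<and> \<psi> p 1 = \<mu> p * v1 p"
    unfolding Rr_def by blast
  from assms obtain \<phi> \<nu> where r2: "reachable 1 \<phi>" and h2: "\<forall>p\<in>{0<..<1}. \<nu> p \<noteq> 0 \<and> \<phi> p 0 = \<nu> p * u2 p \<and> \<phi> p 1 = \<nu> p * v2 p"
    unfolding Rr_def by blast
  have e0: "apply_mat 2 permU (tensor_vec 1 1 (\<psi> p) (\<phi> p)) 0 = \<psi> p 0 * \<phi> p 0" for p
    by (simp add: apply_mat_def tensor_vec_def sum4 permU_def)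
  have e2: "apply_mat 2 permU (tensor_vec 1 1 (\<psi> p) (\<phi> p)) 2 = \<psi> p 1 * \<phi> p 1" for p
    by (simp add: apply_mat_def tensor_vec_def sum4 permU_def)
  have "reachable 1 (\<lambda>p. measure_last 1 0 (apply_mat 2 permU (tensor_vec 1 1 (\<psi> p) (\<phi> p))))"
  proof (rule gate2[OF r r2 permU_unitary])
    from nz obtain p where p: "p \<in> {0<..<1}" "v1 p * v2 p \<noteq> 0" by blast
    hence "apply_mat 2 permU (tensor_vec 1 1 (\<psi> p) (\<phi> p)) (2 * 1) \<noteq> 0"
      using h h2 e2[of p] by auto
    hence "\<exists>i<2. apply_mat 2 permU (tensor_vec 1 1 (\<psi> p) (\<phi> p)) (2 * i) \<noteq> 0" by (intro exI[of _ "1::nat"]) simp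
    thus "\<exists>p\<in>{0<..<1}. \<exists>i<2. apply_mat 2 permU (tensor_vec 1 1 (\<psi> p) (\<phi> p)) (2 * i) \<noteq> 0"
      using p by blast
  qed
  moreover have "\<forall>p\<in>{0<..<1}. \<mu> p * \<nu> p \<noteq> 0 \<and>
     measure_last 1 0 (apply_mat 2 permU (tensor_vec 1 1 (\<psi> p) (\<phi> p))) 0 = \<mu> p * \<nu> p * (u1 p * u2 p) \<and>
     measure_last 1 0 (apply_mat 2 permU (tensor_vec 1 1 (\<psi> p) (\<phi> p))) 1 = \<mu> p * \<nu> p * (v1 p * v2 p)"
    unfolding ml e0 e2 using h h2 by simp
  ultimately show ?thesis unfolding Rr_def
    by (intro exI[where x="\<lambda>p. measure_last 1 0 (apply_mat 2 permU (tensor_vec 1 1 (\<psi> p) (\<phi> p)))"] exI[where x="\<lambda>p. \<mu> p * \<nu> p"]) blast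
qed

lemma Rr_sum:
  assumes "Rr u1 v1" "Rr u2 v2" and nz: "\<exists>p\<in>{0<..<1}. v1 p * v2 p \<noteq> 0"
  shows "Rr (\<lambda>p. hh * (u1 p * v2 p + v1 p * u2 p)) (\<lambda>p. v1 p * v2 p)"
proof -
  from assms obtain \<psi> \<mu> where r: "reachable 1 \<psi>" and h: "\<forall>p\<in>{0<..<1}. \<mu> p \<noteq> 0 \<and> \<psi> p 0 = \<mu> p * u1 p \<and> \<psi> p 1 = \<mu> p * v1 p"
    unfolding Rr_def by blast
  from assms obtain \<phi> \<nu> where r2: "reachable 1 \<phi>" and h2: "\<forall>p\<in>{0<..<1}. \<nu> p \<noteq> 0 \<and> \<phi> p 0 = \<nu> p * u2 p \<and> \<phi> p 1 = \<nu> p * v2 p"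
    unfolding Rr_def by blast
  have e0: "apply_mat 2 sumU (tensor_vec 1 1 (\<psi> p) (\<phi> p)) 0 = hh * (\<psi> p 0 * \<phi> p 1 + \<psi> p 1 * \<phi> p 0)" for p
    unfolding apply_mat_def by (simp add: sum4 tv tv' sumU_def algebra_simps)
  have e2: "apply_mat 2 sumU (tensor_vec 1 1 (\<psi> p) (\<phi> p)) 2 = \<psi> p 1 * \<phi> p 1" for p
    by (simp add: apply_mat_def tensor_vec_def sum4 sumU_def)
  have "reachable 1 (\<lambda>p. measure_last 1 0 (apply_mat 2 sumU (tensor_vec 1 1 (\<psi> p) (\<phi> p))))"
  proof (rule gate2[OF r r2 sumU_unitary])
    from nz obtain p where p: "p \<in> {0<..<1}" "v1 p * v2 p \<noteq> 0" by blast
    hence "apply_mat 2 sumU (tensor_vec 1 1 (\<psi> p) (\<phi> p)) (2 * 1) \<noteq> 0"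
      using h h2 e2[of p] by auto
    hence "\<exists>i<2. apply_mat 2 sumU (tensor_vec 1 1 (\<psi> p) (\<phi> p)) (2 * i) \<noteq> 0" by (intro exI[of _ "1::nat"]) simp
    thus "\<exists>p\<in>{0<..<1}. \<exists>i<2. apply_mat 2 sumU (tensor_vec 1 1 (\<psi> p) (\<phi> p)) (2 * i) \<noteq> 0"
      using p by blast
  qed
  moreover have "\<forall>p\<in>{0<..<1}. \<mu> p * \<nu> p \<noteq> 0 \<and>
     measure_last 1 0 (apply_mat 2 sumU (tensor_vec 1 1 (\<psi> p) (\<phi> p))) 0 = \<mu> p * \<nu> p * (hh * (u1 p * v2 p + v1 p * u2 p)) \<and>
     measure_last 1 0 (apply_mat 2 sumU (tensor_vec 1 1 (\<psi> p) (\<phi> p))) 1 = \<mu> p * \<nu> p * (v1 p * v2 p)"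
    unfolding ml e0 e2 using h h2 by (simp add: algebra_simps)
  ultimately show ?thesis unfolding Rr_def
    by (intro exI[where x="\<lambda>p. measure_last 1 0 (apply_mat 2 sumU (tensor_vec 1 1 (\<psi> p) (\<phi> p)))"] exI[where x="\<lambda>p. \<mu> p * \<nu> p"]) blast
qed

definition Qd :: "(real \<Rightarrow> complex) \<Rightarrow> bool" where "Qd u \<longleftrightarrow> Rr u (\<lambda>_. 1)"

lemma Qd_cong: "Qd u \<Longrightarrow> (\<And>p. p \<in> {0<..<1} \<Longrightarrow> u p = u' p) \<Longrightarrow> Qd u'"
  unfolding Qd_def by (erule Rr_cong) auto

lemma Rr_div: assumes "Rr u v" "\<forall>p\<in>{0<..<1}. v p \<noteq> 0" shows "Qd (\<lambda>p. u p / v p)"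
proof -
  from assms obtain \<psi> \<mu> where r: "reachable 1 \<psi>" and h: "\<forall>p\<in>{0<..<1}. \<mu> p \<noteq> 0 \<and> \<psi> p 0 = \<mu> p * u p \<and> \<psi> p 1 = \<mu> p * v p"
    unfolding Rr_def by blast
  have "\<forall>p\<in>{0<..<1}. \<mu> p * v p \<noteq> 0 \<and> \<psi> p 0 = (\<mu> p * v p) * (u p / v p) \<and> \<psi> p 1 = (\<mu> p * v p) * 1"
    using h assms(2) by auto
  with r show ?thesis unfolding Qd_def Rr_def by (intro exI[where x=\<psi>] exI[where x="\<lambda>p. \<mu> p * v p"]) blast
qed

lemma Qd_const: "Qd (\<lambda>_. a)" unfolding Qd_def by (rule Rr_const)

lemma half_in: "(1/2::real) \<in> {0<..<1}" by simp

lemma Qd_mult: "Qd u \<Longrightarrow> Qd w \<Longrightarrow> Qd (\<lambda>p. u p * w p)"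
  unfolding Qd_def using Rr_prod[of u "\<lambda>_. 1" w "\<lambda>_. 1"] half_in by fastforce

lemma Qd_add: assumes "Qd u" "Qd w" shows "Qd (\<lambda>p. u p + w p)"
proof -
  have "Rr (\<lambda>p. hh * (u p * 1 + 1 * w p)) (\<lambda>p. 1 * 1)"
    using Rr_sum[of u "\<lambda>_. 1" w "\<lambda>_. 1"] assms half_in unfolding Qd_def by fastforce
  hence "Qd (\<lambda>p. hh * (u p + w p))" unfolding Qd_def by (rule Rr_cong) auto
  hence "Qd (\<lambda>p. hh * (u p + w p) * complex_of_real (sqrt 2))" by (rule Qd_mult[OF _ Qd_const])
  moreover have e: "hh * complex_of_real (sqrt 2) = 1" unfolding hh_def
    by (simp flip: of_real_mult)
  ultimately show ?thesis
    by (elim Qd_cong) (metis e mult.commute mult.left_commute mult_1_right)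
qed

lemma Qd_s: "Qd (\<lambda>p. complex_of_real (sqrt (p / (1 - p))))"
proof -
  have "Qd (\<lambda>p. complex_of_real (sqrt p) / complex_of_real (sqrt (1 - p)))"
    by (rule Rr_div[OF Rr_copy]) auto
  thus ?thesis by (rule Qd_cong) (simp add: real_sqrt_divide)
qed

lemma Qd_p: "Qd (\<lambda>p. complex_of_real p)"
proof -
  have "Qd (\<lambda>p. 1 + complex_of_real (sqrt (p / (1 - p))) * complex_of_real (sqrt (p / (1 - p))))"
    by (rule Qd_add[OF Qd_const Qd_mult[OF Qd_s Qd_s]])
  hence "Qd (\<lambda>p. complex_of_real (1 / (1 - p)))"
  proof (rule Qd_cong)
    fix p :: real assume p: "p \<in> {0<..<1}"
    have "1 + sqrt (p / (1 - p)) * sqrt (p / (1 - p)) = 1 / (1 - p)"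
      using p by (simp add: field_simps)
    thus "1 + complex_of_real (sqrt (p / (1 - p))) * complex_of_real (sqrt (p / (1 - p))) = complex_of_real (1 / (1 - p))"
      by (metis of_real_1 of_real_add of_real_mult)
  qed
  hence "Rr (\<lambda>_. 1) (\<lambda>p. complex_of_real (1 / (1 - p)))" unfolding Qd_def by (rule Rr_swap)
  hence "Qd (\<lambda>p. 1 / complex_of_real (1 / (1 - p)))" by (rule Rr_div) auto
  hence "Qd (\<lambda>p. 1 + (-1) * (1 / complex_of_real (1 / (1 - p))))" by (rule Qd_add[OF Qd_const Qd_mult[OF Qd_const]])
  thus ?thesis by (rule Qd_cong) (auto simp: field_simps)
qed

definition Qr :: "(real \<Rightarrow> real) \<Rightarrow> bool" where "Qr F \<longleftrightarrow> Qd (\<lambda>p. complex_of_real (F p))"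

lemma Qr_add: "Qr F \<Longrightarrow> Qr G \<Longrightarrow> Qr (\<lambda>p. F p + G p)"
  unfolding Qr_def by (drule (1) Qd_add) simp
lemma Qr_mult: "Qr F \<Longrightarrow> Qr G \<Longrightarrow> Qr (\<lambda>p. F p * G p)"
  unfolding Qr_def by (drule (1) Qd_mult) simp
lemma Qr_const: "Qr (\<lambda>_. c)" unfolding Qr_def by (rule Qd_const)
lemma Qr_s: "Qr (\<lambda>p. sqrt (p / (1 - p)))" unfolding Qr_def by (rule Qd_s)
lemma Qr_poly: "Qr (\<lambda>p. poly A p)"
proof (induction A)
  case 0 then show ?case using Qr_const[of 0] by simp
next
  case (pCons a A)
  have "Qr (\<lambda>p. a + p * poly A p)"
    by (rule Qr_add[OF Qr_const Qr_mult[OF _ pCons.IH]]) (use Qd_p in \<open>simp add: Qr_def\<close>)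
  thus ?case by simp
qed

lemma exists_nonroot: assumes "(q::real poly) \<noteq> 0" shows "\<exists>p\<in>{0<..<1::real}. poly q p \<noteq> 0"
proof (rule ccontr)
  assume "\<not> ?thesis"
  hence "{0<..<1::real} \<subseteq> {x. poly q x = 0}" by auto
  moreover have "finite {x. poly q x = 0}" by (rule poly_roots_finite[OF assms])
  ultimately have "finite {0<..<1::real}" by (rule finite_subset)
  thus False using infinite_Ioo[of "0::real" 1] by simp
qed

lemma backward:
  fixes f :: "real \<Rightarrow> real"
  assumes f01: "\<forall>p\<in>{0..1}. 0 \<le> f p \<and> f p \<le> 1"
      and fne: "\<forall>p\<in>{0<..<1}. f p \<noteq> 1"
      and g: "g2 \<noteq> 0" "g4 \<noteq> 0"
      and eq: "\<forall>p\<in>{0<..<1}. poly g2 p \<noteq> 0 \<and> poly g4 p \<noteq> 0 \<longrightarrow>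
             sqrt (f p / (1 - f p)) =
               poly g1 p / poly g2 p * sqrt (p / (1 - p)) + poly g3 p / poly g4 p"
  shows "simulable (\<lambda>p. complex_of_real (sqrt (f p))) (\<lambda>p. complex_of_real (sqrt (1 - f p)))"
proof -
  define G where "G p = poly g2 p * poly g4 p" for p
  define U where "U p = G p * (poly g1 p * poly g4 p * sqrt (p / (1 - p)) + poly g3 p * poly g2 p)" for p
  define V where "V p = G p * G p" for p
  have QU: "Qr U" unfolding U_def G_def
    by (intro Qr_mult Qr_add Qr_poly Qr_s)
  have QV: "Qr V" unfolding V_def G_def
    by (intro Qr_mult Qr_add Qr_poly Qr_s)
  from exists_nonroot[of "g2 * g4"] g obtain p0 where p0: "p0 \<in> {0<..<1}" "G p0 \<noteq> 0"
    unfolding G_def by auto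
  have "Rr (\<lambda>_. 1) (\<lambda>p. complex_of_real (V p))" using QV unfolding Qr_def Qd_def by (rule Rr_swap)
  hence "Rr (\<lambda>p. complex_of_real (U p) * 1) (\<lambda>p. 1 * complex_of_real (V p))"
    using QU unfolding Qr_def Qd_def
    by (intro Rr_prod) (use p0 in \<open>auto simp: V_def\<close>)
  then obtain \<psi> \<mu> where r: "reachable 1 \<psi>" and h: "\<forall>p\<in>{0<..<1}. \<mu> p \<noteq> 0 \<and>
      \<psi> p 0 = \<mu> p * complex_of_real (U p) \<and> \<psi> p 1 = \<mu> p * complex_of_real (V p)"
    unfolding Rr_def by auto
  have norm: "\<forall>p\<in>{0<..<1}. (cmod (complex_of_real (sqrt (f p))))^2 + (cmod (complex_of_real (sqrt (1 - f p))))^2 = 1"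
  proof
    fix p :: real assume "p \<in> {0<..<1}"
    hence "0 \<le> f p" "f p \<le> 1" using f01 by auto
    thus "(cmod (complex_of_real (sqrt (f p))))^2 + (cmod (complex_of_real (sqrt (1 - f p))))^2 = 1"
      by simp
  qed
  have prp: "\<exists>c. c \<noteq> 0 \<and> \<psi> p 0 = c * complex_of_real (sqrt (f p)) \<and> \<psi> p 1 = c * complex_of_real (sqrt (1 - f p))"
    if p: "p \<in> {0<..<1}" and nz: "\<psi> p 0 \<noteq> 0 \<or> \<psi> p 1 \<noteq> 0" for p
  proof -
    have f0: "0 \<le> f p" "f p \<le> 1" using f01 p by auto
    have "f p \<noteq> 1" using fne p by blast
    hence f: "0 \<le> f p" "f p < 1" using f0 by auto
    have "G p \<noteq> 0" using nz h p unfolding U_def V_def by auto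
    hence g2: "poly g2 p \<noteq> 0" and g4: "poly g4 p \<noteq> 0" unfolding G_def by auto
    define r where "r = sqrt (f p / (1 - f p))"
    have r: "r = poly g1 p / poly g2 p * sqrt (p / (1 - p)) + poly g3 p / poly g4 p"
      using eq p g2 g4 unfolding r_def by blast
    have UV: "U p = V p * r" unfolding r U_def V_def G_def using g2 g4 by (simp add: field_simps)
    have sq: "sqrt (f p) = sqrt (1 - f p) * r" unfolding r_def using f
      by (simp add: real_sqrt_divide)
    have s1: "sqrt (1 - f p) \<noteq> 0" using f by simp
    define c where "c = \<mu> p * complex_of_real (V p) / complex_of_real (sqrt (1 - f p))"
    have "c \<noteq> 0" unfolding c_def using h p \<open>G p \<noteq> 0\<close> s1 by (simp add: V_def)
    moreover have "\<psi> p 0 = c * complex_of_real (sqrt (f p))"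
      unfolding c_def sq using h p UV s1 by (simp add: field_simps)
    moreover have "\<psi> p 1 = c * complex_of_real (sqrt (1 - f p))"
      unfolding c_def using h p s1 by (simp add: field_simps)
    ultimately show ?thesis by blast
  qed
  show ?thesis unfolding simulable_def using norm r prp by blast
qed

definition rep :: "nat \<Rightarrow> (real \<Rightarrow> nat \<Rightarrow> complex) \<Rightarrow> bool" where
  "rep n \<psi> \<longleftrightarrow> (\<exists>N P. (\<forall>p\<in>{0<..<1}. \<forall>i. \<psi> p i = complex_of_real (sqrt (1 - p) ^ N) * poly (P i) (complex_of_real (sqrt (p / (1 - p)))))
      \<and> (\<exists>i<2^n. P i \<noteq> 0))"

lemma smult_sum_right: "smult c (\<Sum>j\<in>A. f j) = (\<Sum>j\<in>A. smult c (f j))"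
  by (induction A rule: infinite_finite_induct) (simp_all add: smult_add_right)

lemma unitary_inv:
  assumes U: "unitary_mat n U" and i0: "i0 < 2^n"
  shows "(\<Sum>k<2^n. smult (cnj (U k i0)) (\<Sum>j<2^n. smult (U k j) (P j))) = (P i0 :: complex poly)"
proof -
  have "(\<Sum>k<2^n. smult (cnj (U k i0)) (\<Sum>j<2^n. smult (U k j) (P j)))
      = (\<Sum>k<2^n. \<Sum>j<2^n. smult (cnj (U k i0) * U k j) (P j))"
    by (simp add: smult_sum_right)
  also have "\<dots> = (\<Sum>j<2^n. \<Sum>k<2^n. smult (cnj (U k i0) * U k j) (P j))"
    by (rule sum.swap)
  also have "\<dots> = (\<Sum>j<2^n. smult (\<Sum>k<2^n. cnj (U k i0) * U k j) (P j))"
    by (simp add: smult_sum)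
  also have "\<dots> = (\<Sum>j<2^n. smult (if i0 = j then 1 else 0) (P j))"
    using U i0 unfolding unitary_mat_def by (intro sum.cong) auto
  also have "\<dots> = (\<Sum>j<2^n. if i0 = j then P j else 0)" by (intro sum.cong) auto
  also have "\<dots> = P i0" using i0 by (simp add: sum.delta)
  finally show ?thesis .
qed

lemma reachable_rep: "reachable n \<psi> \<Longrightarrow> rep n \<psi>"
proof (induction rule: reachable.induct)
  case copy
  show ?case unfolding rep_def
  proof (rule exI[where x=1], rule exI[where x="\<lambda>i. if i = 0 then [:0,1:] else if i = 1 then 1 else 0"], intro conjI ballI allI)
    fix p :: real and i :: nat assume p: "p \<in> {0<..<1}"
    have "sqrt p = sqrt (1 - p) * sqrt (p / (1 - p))" using p by (simp add: real_sqrt_divide)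
    hence "complex_of_real (sqrt p) = complex_of_real (sqrt (1 - p)) * complex_of_real (sqrt (p / (1 - p)))"
      by (metis of_real_mult)
    thus "(if i = 0 then complex_of_real (sqrt p) else if i = 1 then complex_of_real (sqrt (1 - p)) else 0) =
         complex_of_real (sqrt (1 - p) ^ 1) * poly (if i = 0 then [:0, 1:] else if i = 1 then 1 else 0) (complex_of_real (sqrt (p / (1 - p))))"
      by simp
  qed (rule exI[where x="1::nat"], simp)
next
  case (const a)
  show ?case unfolding rep_def
  proof (rule exI[where x=0], rule exI[where x="\<lambda>i. if i = 0 then [:a:] else if i = 1 then 1 else 0"], intro conjI ballI allI)
    fix p :: real and i :: nat
    show "(if i = 0 then a else if i = 1 then 1 else 0) =
         complex_of_real (sqrt (1 - p) ^ 0) * poly (if i = 0 then [:a:] else if i = 1 then 1 else 0) (complex_of_real (sqrt (p / (1 - p))))"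
      by simp
  next
    show "\<exists>i<(2::nat)^1. (if i = 0 then [:a:] else if i = 1 then 1 else 0) \<noteq> (0::complex poly)"
      by (intro exI[where x="1::nat"]) simp
  qed
next
  case (tensor n \<psi> m \<phi>)
  from tensor.IH(1) obtain N1 P1 where h1: "\<forall>p\<in>{0<..<1}. \<forall>i. \<psi> p i = complex_of_real (sqrt (1 - p) ^ N1) * poly (P1 i) (complex_of_real (sqrt (p / (1 - p))))"
    and i1: "\<exists>i<2^n. P1 i \<noteq> 0" unfolding rep_def by blast
  from tensor.IH(2) obtain N2 P2 where h2: "\<forall>p\<in>{0<..<1}. \<forall>i. \<phi> p i = complex_of_real (sqrt (1 - p) ^ N2) * poly (P2 i) (complex_of_real (sqrt (p / (1 - p))))"
    and i2: "\<exists>i<2^m. P2 i \<noteq> 0" unfolding rep_def by blast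
  show ?case unfolding rep_def
  proof (rule exI[where x="N1 + N2"], rule exI[where x="\<lambda>i. if i < 2^(n+m) then P1 (i div 2^m) * P2 (i mod 2^m) else 0"], intro conjI ballI allI)
    fix p :: real and i :: nat assume p: "p \<in> {0<..<1}"
    show "tensor_vec n m (\<psi> p) (\<phi> p) i = complex_of_real (sqrt (1 - p) ^ (N1 + N2)) *
        poly (if i < 2 ^ (n + m) then P1 (i div 2 ^ m) * P2 (i mod 2 ^ m) else 0) (complex_of_real (sqrt (p / (1 - p))))"
      unfolding tensor_vec_def using h1 h2 p by (simp add: power_add)
  next
    from i1 i2 obtain a b where ab: "a < 2^n" "P1 a \<noteq> 0" "b < 2^m" "P2 b \<noteq> 0" by blast
    have lt: "a * 2^m + b < 2^(n+m)"
    proof -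
      have "a * 2^m + b < (a + 1) * 2^m" using ab by simp
      also have "\<dots> \<le> 2^n * 2^m" using ab by (intro mult_right_mono) auto
      finally show ?thesis by (simp add: power_add)
    qed
    have "(a * 2^m + b) div 2^m = a" "(a * 2^m + b) mod 2^m = b" using ab by auto
    thus "\<exists>i<2^(n+m). (if i < 2^(n+m) then P1 (i div 2^m) * P2 (i mod 2^m) else 0) \<noteq> 0"
      using lt ab by (intro exI[where x="a * 2^m + b"]) auto
  qed
next
  case (unitary n \<psi> U)
  from unitary.IH obtain N P where h: "\<forall>p\<in>{0<..<1}. \<forall>i. \<psi> p i = complex_of_real (sqrt (1 - p) ^ N) * poly (P i) (complex_of_real (sqrt (p / (1 - p))))"
    and i1: "\<exists>i<2^n. P i \<noteq> 0" unfolding rep_def by blast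
  define P' where "P' i = (if i < 2^n then (\<Sum>j<2^n. smult (U i j) (P j)) else 0)" for i
  show ?case unfolding rep_def
  proof (rule exI[where x=N], rule exI[where x=P'], intro conjI ballI allI)
    fix p :: real and i :: nat assume p: "p \<in> {0<..<1}"
    show "apply_mat n U (\<psi> p) i = complex_of_real (sqrt (1 - p) ^ N) * poly (P' i) (complex_of_real (sqrt (p / (1 - p))))"
      unfolding apply_mat_def P'_def using h p by (simp add: poly_sum sum_distrib_left algebra_simps)
  next
    show "\<exists>i<2^n. P' i \<noteq> 0"
    proof (rule ccontr)
      assume "\<not> ?thesis"
      hence z: "\<forall>i<2^n. (\<Sum>j<2^n. smult (U i j) (P j)) = 0" unfolding P'_def by auto
      from i1 obtain i0 where i0: "i0 < 2^n" "P i0 \<noteq> 0" by blast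
      have "P i0 = (\<Sum>k<2^n. smult (cnj (U k i0)) (\<Sum>j<2^n. smult (U k j) (P j)))"
        using unitary_inv[OF unitary.hyps(2) i0(1)] by simp
      also have "\<dots> = 0" using z by simp
      finally show False using i0 by simp
    qed
  qed
next
  case (measure n \<psi> b)
  from measure.IH obtain N P where h: "\<forall>p\<in>{0<..<1}. \<forall>i. \<psi> p i = complex_of_real (sqrt (1 - p) ^ N) * poly (P i) (complex_of_real (sqrt (p / (1 - p))))"
    unfolding rep_def by blast
  show ?case unfolding rep_def
  proof (rule exI[where x=N], rule exI[where x="\<lambda>i. if i < 2^n then P (2 * i + b) else 0"], intro conjI ballI allI)
    fix p :: real and i :: nat assume p: "p \<in> {0<..<1}"
    show "measure_last n b (\<psi> p) i = complex_of_real (sqrt (1 - p) ^ N) * poly (if i < 2^n then P (2 * i + b) else 0) (complex_of_real (sqrt (p / (1 - p))))"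
      unfolding measure_last_def using h p by simp
  next
    from measure.hyps(3) obtain p i where "p \<in> {0<..<1}" "i < 2^n" "\<psi> p (2 * i + b) \<noteq> 0" by blast
    with h have "P (2 * i + b) \<noteq> 0" by auto
    thus "\<exists>i<2^n. (if i < 2^n then P (2 * i + b) else 0) \<noteq> 0" using \<open>i < 2^n\<close> by auto
  qed
qed

lemma poly_map_Re: "poly (map_poly Re Q) x = Re (poly Q (complex_of_real x))"
proof (induction Q)
  case 0 then show ?case by simp
next
  case (pCons a Q)
  have "map_poly Re (pCons a Q) = pCons (Re a) (map_poly Re Q)"
    by (simp add: map_poly_pCons)
  then show ?case using pCons by simp
qed

definition ev :: "real poly \<Rightarrow> real poly" where
  "ev F = (\<Sum>i\<le>degree F. if even i then smult (coeff F i) ([:0,1:]^(i div 2) * [:1,-1:]^(degree F - i div 2)) else 0)"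
definition od :: "real poly \<Rightarrow> real poly" where
  "od F = (\<Sum>i\<le>degree F. if odd i then smult (coeff F i) ([:0,1:]^(i div 2) * [:1,-1:]^(degree F - i div 2)) else 0)"

lemma evod:
  fixes p x :: real
  assumes p: "0 < p" "p < 1" and x: "x^2 = p / (1 - p)"
  shows "(1 - p)^degree F * poly F x = poly (ev F) p + x * poly (od F) p"
proof -
  define d where "d = degree F"
  have trm: "(1 - p)^d * (coeff F i * x^i) =
      (if even i then coeff F i * (p^(i div 2) * (1-p)^(d - i div 2)) else 0) +
      x * (if odd i then coeff F i * (p^(i div 2) * (1-p)^(d - i div 2)) else 0)" if i: "i \<le> d" for i
  proof -
    define k where "k = i div 2"
    have kd: "k \<le> d" using i unfolding k_def by simp
    have xi: "x^i = (p / (1 - p))^k * x^(i mod 2)"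
    proof -
      have "x^i = x^(2 * k + i mod 2)" unfolding k_def by simp
      also have "\<dots> = (x^2)^k * x^(i mod 2)" by (simp add: power_add power_mult)
      finally show ?thesis using x by simp
    qed
    have qd: "(1 - p)^d = (1 - p)^k * (1 - p)^(d - k)" using kd by (simp flip: power_add)
    have "(1 - p)^d * (coeff F i * x^i) = coeff F i * (p^k * (1-p)^(d-k)) * x^(i mod 2)"
      unfolding xi qd using p by (simp add: power_divide field_simps)
    thus ?thesis unfolding k_def by (cases "even i") (auto simp: odd_iff_mod_2_eq_one elim: evenE)
  qed
  have "(1 - p)^d * poly F x = (\<Sum>i\<le>d. (1 - p)^d * (coeff F i * x^i))"
    unfolding d_def by (simp add: poly_altdef sum_distrib_left)
  also have "\<dots> = (\<Sum>i\<le>d. (if even i then coeff F i * (p^(i div 2) * (1-p)^(d - i div 2)) else 0) +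
      x * (if odd i then coeff F i * (p^(i div 2) * (1-p)^(d - i div 2)) else 0))"
    by (rule sum.cong) (auto simp: trm)
  also have "\<dots> = poly (ev F) p + x * poly (od F) p"
  proof -
    have e: "poly (ev F) p = (\<Sum>i\<le>d. if even i then coeff F i * (p^(i div 2) * (1-p)^(d - i div 2)) else 0)"
      unfolding ev_def d_def poly_sum by (rule sum.cong) (auto simp: poly_power)
    have o: "poly (od F) p = (\<Sum>i\<le>d. if odd i then coeff F i * (p^(i div 2) * (1-p)^(d - i div 2)) else 0)"
      unfolding od_def d_def poly_sum by (rule sum.cong) (auto simp: poly_power)
    show ?thesis unfolding e o by (simp add: sum.distrib sum_distrib_left)
  qed
  finally show ?thesis unfolding d_def .
qed

lemma big_s:
  assumes "finite (S :: complex set)"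
  shows "\<exists>p\<in>{0<..<1::real}. complex_of_real (sqrt (p / (1 - p))) \<notin> S \<and> complex_of_real (- sqrt (p / (1 - p))) \<notin> S"
proof -
  define M where "M = Max (insert 0 (cmod ` S)) + 1"
  have le: "cmod z \<le> Max (insert 0 (cmod ` S))" if "z \<in> S" for z
    using assms that by (intro Max_ge) auto
  have "0 \<le> Max (insert 0 (cmod ` S))" using assms by (intro Max_ge) auto
  hence M0: "M > 0" unfolding M_def by simp
  define p where "p = M^2 / (1 + M^2)"
  have "M^2 > 0" using M0 by simp
  moreover have "1 + M^2 > 0" by (simp add: add_pos_nonneg)
  ultimately have p01: "p \<in> {0<..<1}" unfolding p_def by (auto simp: divide_pos_pos divide_less_eq)
  have h1: "1 + M^2 \<noteq> 0" using \<open>1 + M^2 > 0\<close> by simp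
  have "1 - p = 1 / (1 + M^2)" unfolding p_def using h1 by (simp add: field_simps)
  hence "p / (1 - p) = M^2" unfolding p_def using h1 by simp
  hence sp: "sqrt (p / (1 - p)) = M" using M0 by simp
  have c1: "cmod (complex_of_real M) = M" "cmod (complex_of_real (-M)) = M" using M0 by simp_all
  have "Max (insert 0 (cmod ` S)) < M" unfolding M_def by simp
  hence "complex_of_real M \<notin> S" "complex_of_real (- M) \<notin> S"
    using le[of "complex_of_real M"] le[of "complex_of_real (-M)"] c1 by force+
  thus ?thesis using p01 sp by auto
qed

lemma forward:
  fixes f :: "real \<Rightarrow> real"
  assumes f01: "\<forall>p\<in>{0..1}. 0 \<le> f p \<and> f p \<le> 1"
      and fne: "\<forall>p\<in>{0<..<1}. f p \<noteq> 1"
      and sim: "simulable (\<lambda>p. complex_of_real (sqrt (f p))) (\<lambda>p. complex_of_real (sqrt (1 - f p)))"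
  shows "\<exists>g1 g2 g3 g4 :: real poly. g2 \<noteq> 0 \<and> g4 \<noteq> 0 \<and>
          (\<forall>p\<in>{0<..<1}. poly g2 p \<noteq> 0 \<and> poly g4 p \<noteq> 0 \<longrightarrow>
             sqrt (f p / (1 - f p)) =
               poly g1 p / poly g2 p * sqrt (p / (1 - p)) + poly g3 p / poly g4 p)"
proof -
  from sim obtain \<psi> where r: "reachable 1 \<psi>" and hs: "\<forall>p\<in>{0<..<1}. (\<psi> p 0 \<noteq> 0 \<or> \<psi> p 1 \<noteq> 0) \<longrightarrow>
            (\<exists>c. c \<noteq> 0 \<and> \<psi> p 0 = c * complex_of_real (sqrt (f p)) \<and> \<psi> p 1 = c * complex_of_real (sqrt (1 - f p)))"
    unfolding simulable_def by blast
  from reachable_rep[OF r] obtain N P where hP: "\<forall>p\<in>{0<..<1}. \<forall>i. \<psi> p i = complex_of_real (sqrt (1 - p) ^ N) * poly (P i) (complex_of_real (sqrt (p / (1 - p))))"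
    and nz: "\<exists>i<2^1. P i \<noteq> 0" unfolding rep_def by blast
  have Y: "complex_of_real (sqrt (1 - p) ^ N) \<noteq> 0" if "p \<in> {0<..<1}" for p using that by simp
  have P1: "P 1 \<noteq> 0"
  proof
    assume P10: "P 1 = 0"
    from nz obtain i where i: "i < 2" "P i \<noteq> 0" by auto
    hence "i = 0 \<or> i = 1" by auto
    hence P0: "P 0 \<noteq> 0" using i P10 by auto
    from big_s[OF poly_roots_finite[OF P0]] obtain p where p: "p \<in> {0<..<1}"
      and pz: "poly (P 0) (complex_of_real (sqrt (p / (1 - p)))) \<noteq> 0" by auto
    have "\<psi> p 0 \<noteq> 0" using hP p pz Y[OF p] by simp
    moreover have "\<psi> p 1 = 0" using hP p P10 by simp
    ultimately obtain c where "c \<noteq> 0" "0 = c * complex_of_real (sqrt (1 - f p))" using hs p by metis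
    hence "sqrt (1 - f p) = 0" by simp
    hence "f p = 1" by simp
    thus False using fne p by blast
  qed
  define A where "A = map_poly Re (P 0 * map_poly cnj (P 1))"
  define B where "B = map_poly Re (P 1 * map_poly cnj (P 1))"
  have pA: "poly A x = Re (poly (P 0) (complex_of_real x) * cnj (poly (P 1) (complex_of_real x)))" for x
    unfolding A_def poly_map_Re by simp
  have pB: "poly B x = (cmod (poly (P 1) (complex_of_real x)))^2" for x
    unfolding B_def poly_map_Re by (simp add: complex_mult_cnj cmod_power2)
  from big_s[OF poly_roots_finite[OF P1]] obtain p1 where p1: "p1 \<in> {0<..<1}"
      and p1z: "poly (P 1) (complex_of_real (sqrt (p1 / (1 - p1)))) \<noteq> 0" by auto
  have B0: "B \<noteq> 0"
  proof
    assume "B = 0"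
    hence "poly B (sqrt (p1 / (1 - p1))) = 0" by simp
    thus False using pB p1z by simp
  qed
  define dA where "dA = degree A"
  define dB where "dB = degree B"
  define Q where "Q = [:1, -1::real:]"
  define X where "X = [:0, 1::real:]"
  define G where "G = Q^dA * (Q * ev B * ev B - X * od B * od B)"
  define g1 where "g1 = Q^dB * Q * (od A * ev B - ev A * od B)"
  define g3 where "g3 = Q^dB * (Q * ev A * ev B - X * od A * od B)"
  have key: "poly G p = (1 - p)^(dA + 1) * ((1 - p)^dB * poly B (sqrt (p / (1 - p)))) * ((1 - p)^dB * poly B (- sqrt (p / (1 - p))))
     \<and> poly g1 p * sqrt (p / (1 - p)) + poly g3 p = (1 - p)^(dB + 1) * ((1 - p)^dA * poly A (sqrt (p / (1 - p)))) * ((1 - p)^dB * poly B (- sqrt (p / (1 - p))))"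
    if p: "p \<in> {0<..<1}" for p
  proof -
    define Sv where "Sv = sqrt (p / (1 - p))"
    have q: "1 - p > 0" using p by simp
    have S2: "Sv^2 = p / (1 - p)" "(- Sv)^2 = p / (1 - p)" unfolding Sv_def using p by simp_all
    have "Sv * Sv = p / (1 - p)" using S2(1) by (simp add: power2_eq_square)
    hence S2': "Sv * Sv * (1 - p) = p" using q by simp
    have eA: "(1 - p)^dA * poly A Sv = poly (ev A) p + Sv * poly (od A) p"
      unfolding dA_def by (rule evod[OF _ _ S2(1)]) (use p in auto)
    have eB: "(1 - p)^dB * poly B Sv = poly (ev B) p + Sv * poly (od B) p"
      unfolding dB_def by (rule evod[OF _ _ S2(1)]) (use p in auto)
    have eB': "(1 - p)^dB * poly B (- Sv) = poly (ev B) p - Sv * poly (od B) p"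
      unfolding dB_def using evod[OF _ _ S2(2), of B] p by auto
    have pQ: "poly Q p = 1 - p" "poly X p = p" unfolding Q_def X_def by simp_all
    define eb where "eb = poly (ev B) p"
    define ob where "ob = poly (od B) p"
    define ae where "ae = poly (ev A) p"
    define ao where "ao = poly (od A) p"
    define qq where "qq = 1 - p"
    have G1: "poly G p = qq^dA * (qq*eb*eb - p*ob*ob)"
      unfolding G_def eb_def ob_def qq_def by (simp add: pQ poly_power algebra_simps)
    have G2: "qq^dA * (qq*eb*eb - (Sv*Sv*qq)*ob*ob) = qq^(dA+1) * ((eb + Sv*ob)*(eb - Sv*ob))"
      by (simp add: algebra_simps)
    have N1: "poly g1 p * Sv + poly g3 p = qq^dB * (qq*Sv*(ao*eb - ae*ob) + qq*ae*eb - p*ao*ob)"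
      unfolding g1_def g3_def eb_def ob_def ae_def ao_def qq_def by (simp add: pQ poly_power algebra_simps)
    have N2: "qq^dB * (qq*Sv*(ao*eb - ae*ob) + qq*ae*eb - (Sv*Sv*qq)*ao*ob) = qq^(dB+1) * ((ae + Sv*ao)*(eb - Sv*ob))"
      by (simp add: algebra_simps)
    have S3: "Sv*Sv*qq = p" using S2' unfolding qq_def .
    have eB2: "qq^dB * poly B Sv = eb + Sv*ob" using eB unfolding qq_def eb_def ob_def .
    have eB3: "qq^dB * poly B (- Sv) = eb - Sv*ob" using eB' unfolding qq_def eb_def ob_def .
    have eA2: "qq^dA * poly A Sv = ae + Sv*ao" using eA unfolding qq_def ae_def ao_def .
    have K1: "poly G p = qq^(dA + 1) * (qq^dB * poly B Sv) * (qq^dB * poly B (- Sv))"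
    proof -
      have "poly G p = qq^dA * (qq*eb*eb - (Sv*Sv*qq)*ob*ob)" unfolding S3 by (rule G1)
      also have "\<dots> = qq^(dA+1) * ((eb + Sv*ob)*(eb - Sv*ob))" by (rule G2)
      also have "\<dots> = qq^(dA + 1) * (qq^dB * poly B Sv) * (qq^dB * poly B (- Sv))"
        unfolding eB2 eB3 by (simp add: mult.assoc)
      finally show ?thesis .
    qed
    have K2: "poly g1 p * Sv + poly g3 p = qq^(dB + 1) * (qq^dA * poly A Sv) * (qq^dB * poly B (- Sv))"
    proof -
      have "poly g1 p * Sv + poly g3 p = qq^dB * (qq*Sv*(ao*eb - ae*ob) + qq*ae*eb - (Sv*Sv*qq)*ao*ob)"
        unfolding S3 by (rule N1)
      also have "\<dots> = qq^(dB+1) * ((ae + Sv*ao)*(eb - Sv*ob))" by (rule N2)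
      also have "\<dots> = qq^(dB + 1) * (qq^dA * poly A Sv) * (qq^dB * poly B (- Sv))"
        unfolding eA2 eB3 by (simp add: mult.assoc)
      finally show ?thesis .
    qed
    show ?thesis using K1 K2 unfolding Sv_def qq_def by blast
  qed
  from big_s[OF finite_imageI[OF poly_roots_finite[OF B0]], of complex_of_real] obtain p2 where
    p2: "p2 \<in> {0<..<1}" and p2z: "poly B (sqrt (p2 / (1 - p2))) \<noteq> 0" "poly B (- sqrt (p2 / (1 - p2))) \<noteq> 0"
    by (auto simp del: of_real_minus simp: image_iff)
  have G0: "G \<noteq> 0"
  proof
    assume "G = 0"
    hence "poly G p2 = 0" by simp
    thus False using key[OF p2] p2 p2z by simp
  qed
  have main: "sqrt (f p / (1 - f p)) = poly g1 p / poly G p * sqrt (p / (1 - p)) + poly g3 p / poly G p"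
    if p: "p \<in> {0<..<1}" and Gp: "poly G p \<noteq> 0" for p
  proof -
    define Sv where "Sv = sqrt (p / (1 - p))"
    define z where "z = complex_of_real Sv"
    define u where "u = poly (P 0) z"
    define w where "w = poly (P 1) z"
    define Yv where "Yv = complex_of_real (sqrt (1 - p) ^ N)"
    have q: "1 - p > 0" using p by simp
    have BS: "poly B Sv \<noteq> 0" using key[OF p] Gp unfolding Sv_def by auto
    hence w0: "w \<noteq> 0" using pB unfolding w_def z_def by auto
    have Yv0: "Yv \<noteq> 0" unfolding Yv_def using Y[OF p] .
    have psi0: "\<psi> p 0 = Yv * u" and psi1: "\<psi> p 1 = Yv * w"
      using hP p unfolding Yv_def u_def w_def z_def Sv_def by auto
    have "\<psi> p 1 \<noteq> 0" using psi1 w0 Yv0 by simp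
    then obtain c where c0: "c \<noteq> 0" "\<psi> p 0 = c * complex_of_real (sqrt (f p))"
       "\<psi> p 1 = c * complex_of_real (sqrt (1 - f p))" using hs p by blast
    hence c: "c \<noteq> 0" "Yv * u = c * complex_of_real (sqrt (f p))"
       "Yv * w = c * complex_of_real (sqrt (1 - f p))" unfolding psi0 psi1 by auto
    have s1: "sqrt (1 - f p) \<noteq> 0" using c(3) w0 Yv0 by auto
    define rr where "rr = sqrt (f p / (1 - f p))"
    have rr: "rr = sqrt (f p) / sqrt (1 - f p)" unfolding rr_def by (simp add: real_sqrt_divide)
    have "u = w * complex_of_real rr"
    proof -
      have "Yv * u * complex_of_real (sqrt (1 - f p)) = Yv * w * complex_of_real (sqrt (f p))"
        unfolding c by simp
      hence "u * complex_of_real (sqrt (1 - f p)) = w * complex_of_real (sqrt (f p))"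
        using Yv0 by (simp add: mult.assoc)
      thus ?thesis unfolding rr using s1 by (simp add: field_simps)
    qed
    hence "poly A Sv = rr * poly B Sv"
      unfolding pA pB u_def[symmetric] w_def[symmetric] z_def[symmetric]
      unfolding cmod_power2 by (simp add: power2_eq_square algebra_simps)
    note AB = this
    have K1: "poly G p = (1 - p)^(dA + 1) * ((1 - p)^dB * poly B Sv) * ((1 - p)^dB * poly B (- Sv))"
      and K2: "poly g1 p * Sv + poly g3 p = (1 - p)^(dB + 1) * ((1 - p)^dA * poly A Sv) * ((1 - p)^dB * poly B (- Sv))"
      using key[OF p] unfolding Sv_def by blast+
    have "rr * poly G p = (1 - p)^(dB + 1) * ((1 - p)^dA * (rr * poly B Sv)) * ((1 - p)^dB * poly B (- Sv))"
      unfolding K1 by (simp add: power_add mult_ac)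
    hence "rr * poly G p = poly g1 p * Sv + poly g3 p" unfolding K2 AB[symmetric] .
    thus ?thesis unfolding rr_def[symmetric] Sv_def[symmetric] using Gp by (simp add: field_simps)
  qed
  show ?thesis using G0 main by blast
qed


theorem mainTheorem2:
  fixes f :: "real \<Rightarrow> real"
  assumes "\<forall>p\<in>{0..1}. 0 \<le> f p \<and> f p \<le> 1"
      and "\<forall>p\<in>{0<..<1}. f p \<noteq> 1"
  shows "simulable (\<lambda>p. complex_of_real (sqrt (f p))) (\<lambda>p. complex_of_real (sqrt (1 - f p)))
    \<longleftrightarrow> (\<exists>g1 g2 g3 g4 :: real poly. g2 \<noteq> 0 \<and> g4 \<noteq> 0 \<and>
          (\<forall>p\<in>{0<..<1}. poly g2 p \<noteq> 0 \<and> poly g4 p \<noteq> 0 \<longrightarrow>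
             sqrt (f p / (1 - f p)) =
               poly g1 p / poly g2 p * sqrt (p / (1 - p)) + poly g3 p / poly g4 p))"
proof
  assume "simulable (\<lambda>p. complex_of_real (sqrt (f p))) (\<lambda>p. complex_of_real (sqrt (1 - f p)))"
  thus "\<exists>g1 g2 g3 g4 :: real poly. g2 \<noteq> 0 \<and> g4 \<noteq> 0 \<and>
          (\<forall>p\<in>{0<..<1}. poly g2 p \<noteq> 0 \<and> poly g4 p \<noteq> 0 \<longrightarrow>
             sqrt (f p / (1 - f p)) =
               poly g1 p / poly g2 p * sqrt (p / (1 - p)) + poly g3 p / poly g4 p)"
    by (rule forward[OF assms])
next
  assume "\<exists>g1 g2 g3 g4 :: real poly. g2 \<noteq> 0 \<and> g4 \<noteq> 0 \<and>
          (\<forall>p\<in>{0<..<1}. poly g2 p \<noteq> 0 \<and> poly g4 p \<noteq> 0 \<longrightarrow>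
             sqrt (f p / (1 - f p)) =
               poly g1 p / poly g2 p * sqrt (p / (1 - p)) + poly g3 p / poly g4 p)"
  then obtain g1 g2 g3 g4 :: "real poly" where "g2 \<noteq> 0" "g4 \<noteq> 0" and
    "\<forall>p\<in>{0<..<1}. poly g2 p \<noteq> 0 \<and> poly g4 p \<noteq> 0 \<longrightarrow>
             sqrt (f p / (1 - f p)) =
               poly g1 p / poly g2 p * sqrt (p / (1 - p)) + poly g3 p / poly g4 p" by blast
  thus "simulable (\<lambda>p. complex_of_real (sqrt (f p))) (\<lambda>p. complex_of_real (sqrt (1 - f p)))"
    by (intro backward[OF assms])
qed

end
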